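(* Let $\zeta>1$. If a distribution $\mu$ over $\{-1,+1\}^n$ is completely $\zeta$-marginally stable, then for every integer $k\ge1$, the $k$-transformed distribution $\mu_k=\mathrm{Rd}(\mu,k)$ is $2\zeta$-marginally stable.
   Context: For a distribution $\nu$ on $\{-1,+1\}^N$: $\Omega(\nu)$ support, $\nu_\Lambda$ marginal, $\nu^\sigma$ conditional given $\sigma\in\Omega(\nu_\Lambda)$. $\nu$ is $\zeta$-marginally stable if for every $i\in N$, every $S\subseteq\Lambda\subseteq N\setminus\{i\}$, and every $\sigma\in\Omega(\nu_\Lambda)$, $R_i^\sigma\le\zeta$ and $R_i^\sigma\le\zeta R_i^{\sigma_S}$, where $R_i^\sigma=\nu_i^\sigma(+1)/\nu_i^\sigma(-1)$. $\mu$ is completely $\zeta$-marginally stable if $(\boldsymbol\lambda*\mu)$ is $\zeta$-marginally stable for all $\boldsymbol\lambda\in(0,1]^n$, where $(\boldsymbol\lambda*\mu)(\sigma)\propto\mu(\sigma)\prod_{i:\sigma_i=+1}\lambda_i$. $k$-transformation: $\mathrm{Rd}(\mu,k)$ is the law of $Y\in\{-1,+1\}^{[n]\times[k]}$ obtained from $X\sim\mu$: if $X_i=-1$, $Y_{(i,j)}=-1$ for all $j$; if $X_i=+1$, $Y_{(i,j^* )}=+1$ and $Y_{(i,j)}=-1$ for $j\ne j^*$, with $j^*$ uniform in $[k]$ independently. *)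

theory Defs
  imports "HOL-Analysis.Analysis"
begin

text \<open>Configurations in {-1,+1}^N are extensional functions N \<rightarrow>E {-1,1};
  a (possibly partial) configuration on \<Lambda> is an element of \<Lambda> \<rightarrow>E {-1,1}.\<close>

definition cube :: "'i set \<Rightarrow> ('i \<Rightarrow> int) set" where
  "cube N = N \<rightarrow>\<^sub>E {-1, 1}"

definition is_dist :: "'i set \<Rightarrow> (('i \<Rightarrow> int) \<Rightarrow> real) \<Rightarrow> bool" where
  "is_dist N \<nu> \<longleftrightarrow> finite N \<and> (\<forall>x\<in>cube N. 0 \<le> \<nu> x) \<and> (\<Sum>x\<in>cube N. \<nu> x) = 1"

definition marg :: "'i set \<Rightarrow> (('i \<Rightarrow> int) \<Rightarrow> real) \<Rightarrow> 'i set \<Rightarrow> ('i \<Rightarrow> int) \<Rightarrow> real" where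
  "marg N \<nu> \<Lambda> \<sigma> = (\<Sum>x\<in>{x\<in>cube N. restrict x \<Lambda> = \<sigma>}. \<nu> x)"

definition supp_marg :: "'i set \<Rightarrow> (('i \<Rightarrow> int) \<Rightarrow> real) \<Rightarrow> 'i set \<Rightarrow> ('i \<Rightarrow> int) set" where
  "supp_marg N \<nu> \<Lambda> = {\<sigma>\<in>cube \<Lambda>. marg N \<nu> \<Lambda> \<sigma> > 0}"

definition cond_marg :: "'i set \<Rightarrow> (('i \<Rightarrow> int) \<Rightarrow> real) \<Rightarrow> 'i set \<Rightarrow> ('i \<Rightarrow> int) \<Rightarrow> 'i \<Rightarrow> int \<Rightarrow> real" where
  "cond_marg N \<nu> \<Lambda> \<sigma> i c = marg N \<nu> (insert i \<Lambda>) (\<sigma>(i := c)) / marg N \<nu> \<Lambda> \<sigma>"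

definition ratio :: "'i set \<Rightarrow> (('i \<Rightarrow> int) \<Rightarrow> real) \<Rightarrow> 'i set \<Rightarrow> ('i \<Rightarrow> int) \<Rightarrow> 'i \<Rightarrow> ereal" where
  "ratio N \<nu> \<Lambda> \<sigma> i =
     (if cond_marg N \<nu> \<Lambda> \<sigma> i (-1) = 0 then \<infinity>
      else ereal (cond_marg N \<nu> \<Lambda> \<sigma> i 1 / cond_marg N \<nu> \<Lambda> \<sigma> i (-1)))"

definition marg_stable :: "'i set \<Rightarrow> real \<Rightarrow> (('i \<Rightarrow> int) \<Rightarrow> real) \<Rightarrow> bool" where
  "marg_stable N \<zeta> \<nu> \<longleftrightarrow>
     (\<forall>i\<in>N. \<forall>\<Lambda> S. S \<subseteq> \<Lambda> \<and> \<Lambda> \<subseteq> N - {i} \<longrightarrow>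
        (\<forall>\<sigma>\<in>supp_marg N \<nu> \<Lambda>.
           ratio N \<nu> \<Lambda> \<sigma> i \<le> ereal \<zeta> \<and>
           ratio N \<nu> \<Lambda> \<sigma> i \<le> ereal \<zeta> * ratio N \<nu> S (restrict \<sigma> S) i))"

definition tilt :: "'i set \<Rightarrow> ('i \<Rightarrow> real) \<Rightarrow> (('i \<Rightarrow> int) \<Rightarrow> real) \<Rightarrow> ('i \<Rightarrow> int) \<Rightarrow> real" where
  "tilt N lam \<mu> x =
     (\<mu> x * (\<Prod>i\<in>{i\<in>N. x i = 1}. lam i)) /
     (\<Sum>y\<in>cube N. \<mu> y * (\<Prod>i\<in>{i\<in>N. y i = 1}. lam i))"

definition completely_marg_stable :: "'i set \<Rightarrow> real \<Rightarrow> (('i \<Rightarrow> int) \<Rightarrow> real) \<Rightarrow> bool" where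
  "completely_marg_stable N \<zeta> \<mu> \<longleftrightarrow>
     (\<forall>lam. (\<forall>i\<in>N. 0 < lam i \<and> lam i \<le> 1) \<longrightarrow> marg_stable N \<zeta> (tilt N lam \<mu>))"

text \<open>k-transformation Rd(\<mu>,k) on {-1,+1}^(N \<times> [k]), as an explicit probability mass function:
  Y has at most one +1 in each block {i} \<times> [k]; X_i = +1 iff block i contains a +1; and
  P(Y) = \<mu>(X) * k^{-#\{i. X_i = +1\}}.\<close>
definition rd_proj :: "'i set \<Rightarrow> nat \<Rightarrow> ('i \<times> nat \<Rightarrow> int) \<Rightarrow> ('i \<Rightarrow> int)" where
  "rd_proj N k y = (\<lambda>i\<in>N. if \<exists>j\<in>{1..k}. y (i, j) = 1 then 1 else -1)"

definition Rd :: "'i set \<Rightarrow> (('i \<Rightarrow> int) \<Rightarrow> real) \<Rightarrow> nat \<Rightarrow> ('i \<times> nat \<Rightarrow> int) \<Rightarrow> real" where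
  "Rd N \<mu> k y =
     (if y \<in> cube (N \<times> {1..k}) \<and> (\<forall>i\<in>N. card {j\<in>{1..k}. y (i, j) = 1} \<le> 1)
      then \<mu> (rd_proj N k y) / real k ^ card {i\<in>N. rd_proj N k y i = 1}
      else 0)"

end

theory Submission
  imports Defs "HOL-Library.Extended_Real"
begin


lemma finite_cube: "finite N \<Longrightarrow> finite (cube N)"
  by (simp add: cube_def finite_PiE)

lemma cube_val: "x \<in> cube N \<Longrightarrow> l \<in> N \<Longrightarrow> x l = 1 \<or> x l = -1"
  by (auto simp: cube_def PiE_iff)

lemma cube_ext: "x \<in> cube N \<Longrightarrow> l \<notin> N \<Longrightarrow> x l = undefined"
  by (auto simp: cube_def PiE_iff extensional_def)

lemma cube_upd: "x \<in> cube N \<Longrightarrow> i \<in> N \<Longrightarrow> c = 1 \<or> c = -1 \<Longrightarrow> x(i:=c) \<in> cube N"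
  by (auto simp: cube_def PiE_iff extensional_def)

lemma restrict_insert_eq:
  assumes "\<sigma> \<in> extensional \<Lambda>" "i \<notin> \<Lambda>"
  shows "restrict x (insert i \<Lambda>) = \<sigma>(i:=c) \<longleftrightarrow> restrict x \<Lambda> = \<sigma> \<and> x i = c"
proof
  assume h: "restrict x (insert i \<Lambda>) = \<sigma>(i:=c)"
  have "x i = c" using fun_cong[OF h, of i] by simp
  moreover have "restrict x \<Lambda> = \<sigma>"
  proof
    fix l show "restrict x \<Lambda> l = \<sigma> l"
      using fun_cong[OF h, of l] assms by (cases "l \<in> \<Lambda>") (auto simp: extensional_def split: if_splits)
  qed
  ultimately show "restrict x \<Lambda> = \<sigma> \<and> x i = c" by simp
next
  assume h: "restrict x \<Lambda> = \<sigma> \<and> x i = c"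
  show "restrict x (insert i \<Lambda>) = \<sigma>(i:=c)"
  proof
    fix l show "restrict x (insert i \<Lambda>) l = (\<sigma>(i:=c)) l"
      using h assms by (cases "l \<in> \<Lambda>") (auto simp: extensional_def)
  qed
qed

lemma marg_split:
  assumes "finite N" "i \<in> N" "i \<notin> \<Lambda>" "\<sigma> \<in> extensional \<Lambda>"
  shows "marg N \<nu> \<Lambda> \<sigma> = marg N \<nu> (insert i \<Lambda>) (\<sigma>(i:=1)) + marg N \<nu> (insert i \<Lambda>) (\<sigma>(i:=-1))"
proof -
  have e: "{x\<in>cube N. restrict x (insert i \<Lambda>) = \<sigma>(i:=c)} = {x\<in>cube N. restrict x \<Lambda> = \<sigma> \<and> x i = c}" for c
    using restrict_insert_eq[OF assms(4,3)] by auto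
  have u: "{x\<in>cube N. restrict x \<Lambda> = \<sigma>} = {x\<in>cube N. restrict x \<Lambda> = \<sigma> \<and> x i = 1} \<union> {x\<in>cube N. restrict x \<Lambda> = \<sigma> \<and> x i = -1}"
    using cube_val[OF _ assms(2)] by auto
  show ?thesis unfolding marg_def e u
    by (rule sum.union_disjoint) (auto intro: finite_subset[OF _ finite_cube[OF assms(1)]])
qed

lemma marg_nonneg: "\<forall>x\<in>cube N. 0 \<le> \<nu> x \<Longrightarrow> 0 \<le> marg N \<nu> \<Lambda> \<sigma>"
  unfolding marg_def by (rule sum_nonneg) auto

lemma marg_mono:
  assumes "finite N" "\<forall>x\<in>cube N. 0 \<le> \<nu> x" "S \<subseteq> \<Lambda>"
  shows "marg N \<nu> \<Lambda> \<sigma> \<le> marg N \<nu> S (restrict \<sigma> S)"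
  unfolding marg_def
proof (rule sum_mono2)
  show "finite {x \<in> cube N. restrict x S = restrict \<sigma> S}" using finite_cube[OF assms(1)] by auto
  show "{x \<in> cube N. restrict x \<Lambda> = \<sigma>} \<subseteq> {x \<in> cube N. restrict x S = restrict \<sigma> S}"
    using assms(3) by (auto simp: fun_eq_iff restrict_def) 
  show "\<And>b. b \<in> {x \<in> cube N. restrict x S = restrict \<sigma> S} - {x \<in> cube N. restrict x \<Lambda> = \<sigma>} \<Longrightarrow> 0 \<le> \<nu> b"
    using assms(2) by auto
qed

lemma marg_full: "z \<in> cube N \<Longrightarrow> marg N \<nu> N z = \<nu> z"
proof -
  assume z: "z \<in> cube N"
  have "{x\<in>cube N. restrict x N = z} = {z}" using z by (auto simp: cube_def)
  then show ?thesis by (simp add: marg_def)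
qed

lemma ratio_eq:
  assumes "marg N \<nu> \<Lambda> \<sigma> > 0"
  shows "ratio N \<nu> \<Lambda> \<sigma> i = (if marg N \<nu> (insert i \<Lambda>) (\<sigma>(i:=-1)) = 0 then \<infinity>
     else ereal (marg N \<nu> (insert i \<Lambda>) (\<sigma>(i:=1)) / marg N \<nu> (insert i \<Lambda>) (\<sigma>(i:=-1))))"
  using assms by (simp add: ratio_def cond_marg_def)

lemma ratio_nonneg:
  assumes "\<forall>x\<in>cube N. 0 \<le> \<nu> x"
  shows "0 \<le> ratio N \<nu> \<Lambda> \<sigma> i"
  using marg_nonneg[OF assms] unfolding ratio_def cond_marg_def by auto


definition AA :: "'i set \<Rightarrow> (('i \<Rightarrow> int) \<Rightarrow> real) \<Rightarrow> ('i \<Rightarrow> int \<Rightarrow> real) \<Rightarrow> 'i \<Rightarrow> int \<Rightarrow> real" where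
  "AA N \<mu> w i c = (\<Sum>z\<in>{z\<in>cube N. z i = c}. \<mu> z * (\<Prod>l\<in>N-{i}. w l (z l)))"

lemma AA_nonneg:
  assumes "\<forall>x\<in>cube N. 0 \<le> \<mu> x" "\<forall>l\<in>N-{i}. 0 \<le> w l 1 \<and> 0 \<le> w l (-1)" 
  shows "0 \<le> AA N \<mu> w i c"
  unfolding AA_def
proof (rule sum_nonneg)
  fix z assume z: "z \<in> {z\<in>cube N. z i = c}"
  have "0 \<le> (\<Prod>l\<in>N-{i}. w l (z l))"
    by (rule prod_nonneg) (use z assms(2) cube_val in fastforce)
  then show "0 \<le> \<mu> z * (\<Prod>l\<in>N-{i}. w l (z l))" using z assms(1) by simp
qed

lemma lemG:
  assumes dist: "is_dist N \<mu>" and cms: "completely_marg_stable N \<zeta> \<mu>" and iN: "i \<in> N"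
    and w: "\<forall>l\<in>N-{i}. (w l (-1) = 0 \<or> w l (-1) = 1) \<and> 0 \<le> w l 1 \<and> w l 1 \<le> 1"
    and x: "x \<in> cube N" "x i = 1" and zeta: "\<zeta> \<ge> 0" and pos: "(\<Prod>l\<in>N-{i}. w l (x l)) > 0"
  shows "\<mu> x \<le> \<zeta> * \<mu> (x(i:=-1)) \<and> \<mu> x * AA N \<mu> w i (-1) \<le> \<zeta> * \<mu> (x(i:=-1)) * AA N \<mu> w i 1"
proof -
  have finN: "finite N" and mu0: "\<forall>x\<in>cube N. 0 \<le> \<mu> x" and mu1: "(\<Sum>x\<in>cube N. \<mu> x) = 1"
    using dist by (auto simp: is_dist_def)
  have wnn: "\<forall>l\<in>N-{i}. 0 \<le> w l 1 \<and> 0 \<le> w l (-1)"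
  proof
    fix l assume "l \<in> N-{i}"
    then have "(w l (-1) = 0 \<or> w l (-1) = 1) \<and> 0 \<le> w l 1 \<and> w l 1 \<le> 1" using w by blast
    then show "0 \<le> w l 1 \<and> 0 \<le> w l (-1)" by auto
  qed
  define lam where "lam l = (if l = i then 1 else if w l 1 = 0 then 1 else w l 1)" for l
  define P where "P = {l\<in>N-{i}. w l (-1) = 0 \<or> w l 1 = 0}"
  define \<tau> where "\<tau> = restrict x P"
  define T where "T z = (\<Prod>l\<in>{l\<in>N. z l = (1::int)}. lam l)" for z
  define Z where "Z = (\<Sum>y\<in>cube N. \<mu> y * T y)"
  define \<nu> where "\<nu> = tilt N lam \<mu>"
  define x' where "x' = x(i:=-1)"
  have lam: "\<forall>l\<in>N. 0 < lam l \<and> lam l \<le> 1" using w by (fastforce simp: lam_def less_le)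
  have stab: "marg_stable N \<zeta> \<nu>" using cms lam by (auto simp: completely_marg_stable_def \<nu>_def)
  have Tpos: "T z > 0" for z unfolding T_def by (rule prod_pos) (use lam in auto)
  have nu: "\<nu> z = \<mu> z * T z / Z" for z by (simp add: \<nu>_def tilt_def T_def Z_def)
  have Zpos: "Z > 0"
  proof -
    have "\<exists>y\<in>cube N. \<mu> y > 0"
    proof (rule ccontr)
      assume "\<not> ?thesis"
      then have "\<forall>y\<in>cube N. \<mu> y = 0" using mu0 by force
      then have "(\<Sum>x\<in>cube N. \<mu> x) = 0" by simp
      with mu1 show False by simp
    qed
    then obtain y where y: "y \<in> cube N" "\<mu> y > 0" by blast
    have "\<mu> y * T y \<le> Z" unfolding Z_def
      by (rule member_le_sum) (auto simp: finite_cube[OF finN] y intro!: mult_nonneg_nonneg less_imp_le[OF Tpos] mu0[rule_format])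
    moreover have "\<mu> y * T y > 0" using y Tpos by simp
    ultimately show ?thesis by linarith
  qed
  have nu0: "\<forall>z\<in>cube N. 0 \<le> \<nu> z" using nu mu0 Tpos Zpos by (simp add: less_imp_le)
  have T_alt: "T z = (\<Prod>l\<in>N-{i}. if z l = 1 then lam l else 1)" for z
  proof -
    have "T z = (\<Prod>l\<in>N. if z l = 1 then lam l else 1)"
      unfolding T_def by (rule prod.inter_filter[OF finN])
    also have "\<dots> = (if z i = 1 then lam i else 1) * (\<Prod>l\<in>N-{i}. if z l = 1 then lam l else 1)"
      by (rule prod.remove[OF finN iN])
    finally show ?thesis by (simp add: lam_def)
  qed
  have Tx': "T x' = T x" unfolding T_alt x'_def by (rule prod.cong) auto
  have wx: "\<forall>l\<in>N-{i}. w l (x l) \<noteq> 0"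
  proof
    fix l assume l: "l \<in> N-{i}"
    show "w l (x l) \<noteq> 0"
    proof
      assume "w l (x l) = 0"
      then have "(\<Prod>l\<in>N-{i}. w l (x l)) = 0" using finN l by (intro prod_zero) auto
      with pos show False by simp
    qed
  qed
  have K: "(\<Prod>l\<in>N-{i}. w l (z l)) = (if restrict z P = \<tau> then T z else 0)" if z: "z \<in> cube N" for z
  proof (cases "restrict z P = \<tau>")
    case True
    have "(\<Prod>l\<in>N-{i}. w l (z l)) = (\<Prod>l\<in>N-{i}. if z l = 1 then lam l else 1)"
    proof (rule prod.cong)
      fix l assume l: "l \<in> N-{i}"
      have "w l (z l) \<noteq> 0"
      proof (cases "l \<in> P")
        case True
        then have "z l = x l" using fun_cong[OF \<open>restrict z P = \<tau>\<close>, of l] by (simp add: \<tau>_def)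
        then show ?thesis using wx l by simp
      next
        case False
        then show ?thesis using l z cube_val[OF z, of l] by (auto simp: P_def)
      qed
      then show "w l (z l) = (if z l = 1 then lam l else 1)"
        using w l cube_val[OF z, of l] by (auto simp: lam_def)
    qed simp
    then show ?thesis using True T_alt by simp
  next
    case False
    then obtain l where l: "l \<in> P" "z l \<noteq> x l"
      unfolding \<tau>_def restrict_def fun_eq_iff by (auto split: if_splits)
    have lN: "l \<in> N-{i}" using l by (auto simp: P_def)
    have "w l (z l) = 0"
      using l lN wx[rule_format, OF lN] cube_val[OF z, of l] cube_val[OF x(1), of l] by (auto simp: P_def)
    then have "(\<Prod>l\<in>N-{i}. w l (z l)) = 0" using lN finN by (intro prod_zero) auto
    then show ?thesis using False by simp
  qed
  have iP: "i \<notin> P" by (auto simp: P_def)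
  have tauE: "\<tau> \<in> extensional P" by (simp add: \<tau>_def)
  have mA: "marg N \<nu> (insert i P) (\<tau>(i:=c)) = AA N \<mu> w i c / Z" for c
  proof -
    have "{z\<in>cube N. restrict z (insert i P) = \<tau>(i:=c)} = {z\<in>{z\<in>cube N. z i = c}. restrict z P = \<tau>}"
      using restrict_insert_eq[OF tauE iP] by auto
    then have "marg N \<nu> (insert i P) (\<tau>(i:=c)) = (\<Sum>z\<in>{z\<in>cube N. z i = c}. if restrict z P = \<tau> then \<nu> z else 0)"
      unfolding marg_def by (subst sum.inter_filter[symmetric]) (auto simp: finite_cube[OF finN])
    also have "\<dots> = (\<Sum>z\<in>{z\<in>cube N. z i = c}. \<mu> z * (\<Prod>l\<in>N-{i}. w l (z l)) / Z)"
      by (rule sum.cong) (auto simp: K nu)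
    also have "\<dots> = AA N \<mu> w i c / Z" unfolding AA_def by (simp add: sum_divide_distrib)
    finally show ?thesis .
  qed
  show ?thesis
  proof (cases "\<mu> x + \<mu> x' > 0")
    case False
    moreover have "\<mu> x \<ge> 0" "\<mu> x' \<ge> 0" using mu0 x cube_upd[OF x(1) iN, of "-1"] by (auto simp: x'_def)
    ultimately have "\<mu> x = 0" "\<mu> x' = 0" by linarith+
    then show ?thesis
      using AA_nonneg[OF mu0 wnn] by (simp add: x'_def)
  next
    case True
    define \<sigma>0 where "\<sigma>0 = restrict x (N-{i})"
    have s0E: "\<sigma>0 \<in> extensional (N-{i})" by (simp add: \<sigma>0_def)
    have ins: "insert i (N-{i}) = N" using iN by auto
    have x'c: "x' \<in> cube N" using cube_upd[OF x(1) iN] by (simp add: x'_def)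
    have s1: "\<sigma>0(i:=1) = x" using x cube_ext[OF x(1)] by (auto simp: \<sigma>0_def fun_eq_iff)
    have s2: "\<sigma>0(i:=-1) = x'" using x cube_ext[OF x(1)] by (auto simp: \<sigma>0_def x'_def fun_eq_iff)
    have m0: "marg N \<nu> (N-{i}) \<sigma>0 = \<nu> x + \<nu> x'"
      using marg_split[OF finN iN _ s0E, of \<nu>] ins s1 s2 marg_full[OF x(1)] marg_full[OF x'c] by simp
    have m0pos: "marg N \<nu> (N-{i}) \<sigma>0 > 0"
      unfolding m0 nu Tx' using True Tpos[of x] Zpos by (simp add: add_divide_distrib[symmetric] distrib_right[symmetric])
    have supp: "\<sigma>0 \<in> supp_marg N \<nu> (N-{i})"
      using m0pos x(1) by (auto simp: supp_marg_def \<sigma>0_def cube_def PiE_iff)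
    have PN: "P \<subseteq> N-{i}" by (auto simp: P_def)
    have rS: "restrict \<sigma>0 P = \<tau>" using PN by (auto simp: \<sigma>0_def \<tau>_def fun_eq_iff)
    have mPpos: "marg N \<nu> P \<tau> > 0"
      using marg_mono[OF finN nu0 PN, of \<sigma>0] m0pos rS by simp
    have r1: "ratio N \<nu> (N-{i}) \<sigma>0 i = (if \<nu> x' = 0 then \<infinity> else ereal (\<nu> x / \<nu> x'))"
      using ratio_eq[OF m0pos, of i] ins s1 s2 marg_full[OF x(1)] marg_full[OF x'c] by simp
    have r2: "ratio N \<nu> P \<tau> i = (if AA N \<mu> w i (-1) = 0 then \<infinity> else ereal (AA N \<mu> w i 1 / AA N \<mu> w i (-1)))"
      using ratio_eq[OF mPpos, of i] mA Zpos by simp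
    have st: "ratio N \<nu> (N-{i}) \<sigma>0 i \<le> ereal \<zeta> \<and> ratio N \<nu> (N-{i}) \<sigma>0 i \<le> ereal \<zeta> * ratio N \<nu> P (restrict \<sigma>0 P) i"
      using stab iN PN supp unfolding marg_stable_def by blast
    have nx': "\<nu> x' \<noteq> 0" using st r1 by (auto split: if_splits)
    have nux: "\<nu> x = \<mu> x * (T x / Z)" "\<nu> x' = \<mu> x' * (T x / Z)" using nu Tx' by auto
    have TZ: "T x / Z > 0" using Tpos Zpos by simp
    have mx'pos: "\<mu> x' > 0"
    proof -
      have "\<mu> x' \<noteq> 0" using nx' nux by auto
      moreover have "\<mu> x' \<ge> 0" using mu0 x'c by blast
      ultimately show ?thesis by simp
    qed
    have q: "\<nu> x / \<nu> x' = \<mu> x / \<mu> x'" using nux(1,2) TZ Tpos[of x] Zpos by simp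
    have c1: "\<mu> x / \<mu> x' \<le> \<zeta>" using st r1 nx' q by simp
    then have g1: "\<mu> x \<le> \<zeta> * \<mu> x'" using mx'pos by (simp add: divide_le_eq mult.commute)
    have g2: "\<mu> x * AA N \<mu> w i (-1) \<le> \<zeta> * \<mu> x' * AA N \<mu> w i 1"
    proof (cases "AA N \<mu> w i (-1) = 0")
      case True
      have "0 \<le> AA N \<mu> w i 1" using AA_nonneg[OF mu0 wnn] by simp
      moreover note zeta
      ultimately show ?thesis using True mx'pos by simp
    next
      case False
      have Bpos: "AA N \<mu> w i (-1) > 0" using False AA_nonneg[OF mu0 wnn, of "-1"] by linarith
      have "\<mu> x / \<mu> x' \<le> \<zeta> * (AA N \<mu> w i 1 / AA N \<mu> w i (-1))"
        using st r1 r2 nx' q rS False by simp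
      then show ?thesis using Bpos mx'pos by (simp add: field_simps)
    qed
    show ?thesis using g1 g2 by (simp add: x'_def)
  qed
qed


lemma mediant:
  assumes finN: "finite N" and iN: "i \<in> N" and mu0: "\<forall>x\<in>cube N. 0 \<le> \<mu> x"
    and wnn: "\<forall>l\<in>N-{i}. 0 \<le> w l 1 \<and> 0 \<le> w l (-1)"
    and H: "\<forall>x\<in>cube N. x i = 1 \<longrightarrow> (\<Prod>l\<in>N-{i}. w l (x l)) > 0 \<longrightarrow> \<mu> x * b \<le> c * \<mu> (x(i:=-1)) * a"
  shows "AA N \<mu> w i 1 * b \<le> c * AA N \<mu> w i (-1) * a"
proof -
  define W where "W x = (\<Prod>l\<in>N-{i}. w l (x l))" for x :: "'a \<Rightarrow> int"
  define X where "X = {z\<in>cube N. z i = 1}"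
  have Wnn: "W x \<ge> 0" if "x \<in> cube N" for x
    unfolding W_def
  proof (rule prod_nonneg)
    fix l assume l: "l \<in> N-{i}"
    then have "l \<in> N" by blast
    then have xl: "x l = 1 \<or> x l = -1" by (rule cube_val[OF that])
    have "0 \<le> w l 1 \<and> 0 \<le> w l (-1)" using wnn l by blast
    then show "0 \<le> w l (x l)" using xl by auto
  qed
  have WW: "W (x(i:=-1)) = W x" for x unfolding W_def by (rule prod.cong) auto
  have B: "AA N \<mu> w i (-1) = (\<Sum>x\<in>X. \<mu> (x(i:=-1)) * W x)"
  proof -
    have inj: "inj_on (\<lambda>x. x(i:=-1)) X"
    proof (rule inj_onI)
      fix x y assume xy: "x \<in> X" "y \<in> X" and eq: "x(i:=-1) = y(i:=-1)"
      show "x = y"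
      proof
        fix l show "x l = y l" using fun_cong[OF eq, of l] xy by (cases "l = i") (auto simp: X_def)
      qed
    qed
    have img: "(\<lambda>x. x(i:=-1)) ` X = {z\<in>cube N. z i = -1}"
    proof
      show "(\<lambda>x. x(i:=-1)) ` X \<subseteq> {z\<in>cube N. z i = -1}"
        using cube_upd[OF _ iN, of _ "-1"] by (auto simp: X_def)
    next
      show "{z\<in>cube N. z i = -1} \<subseteq> (\<lambda>x. x(i:=-1)) ` X"
      proof
        fix z assume z: "z \<in> {z\<in>cube N. z i = -1}"
        then have "z(i:=1) \<in> X" "z = (z(i:=1))(i:=-1)" using cube_upd[OF _ iN, of z 1] by (auto simp: X_def)
        then show "z \<in> (\<lambda>x. x(i:=-1)) ` X" by blast
      qed
    qed
    have "AA N \<mu> w i (-1) = (\<Sum>z\<in>(\<lambda>x. x(i:=-1)) ` X. \<mu> z * W z)"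
      unfolding AA_def img W_def ..
    also have "\<dots> = (\<Sum>x\<in>X. \<mu> (x(i:=-1)) * W (x(i:=-1)))"
      by (subst sum.reindex[OF inj]) simp
    finally show ?thesis using WW by simp
  qed
  have "AA N \<mu> w i 1 * b = (\<Sum>x\<in>X. \<mu> x * W x * b)"
    unfolding AA_def X_def W_def by (simp add: sum_distrib_right)
  also have "\<dots> \<le> (\<Sum>x\<in>X. c * \<mu> (x(i:=-1)) * a * W x)"
  proof (rule sum_mono)
    fix x assume x: "x \<in> X"
    show "\<mu> x * W x * b \<le> c * \<mu> (x(i:=-1)) * a * W x"
    proof (cases "W x > 0")
      case True
      then have "\<mu> x * b \<le> c * \<mu> (x(i:=-1)) * a" using H x by (auto simp: X_def W_def)
      then have "(\<mu> x * b) * W x \<le> (c * \<mu> (x(i:=-1)) * a) * W x"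
        using True by (intro mult_right_mono) auto
      then show ?thesis by (simp add: algebra_simps)
    next
      case False
      then have "W x = 0" using Wnn x by (force simp: X_def)
      then show ?thesis by simp
    qed
  qed
  also have "\<dots> = c * AA N \<mu> w i (-1) * a"
    unfolding B by (simp add: sum_distrib_left sum_distrib_right algebra_simps)
  finally show ?thesis .
qed


definition gy :: "'i set \<Rightarrow> nat \<Rightarrow> ('i \<Rightarrow> nat) \<Rightarrow> ('i \<times> nat \<Rightarrow> int)" where
  "gy N k f = (\<lambda>p\<in>N\<times>{1..k}. if snd p = f (fst p) then 1 else -1)"
definition xf :: "'i set \<Rightarrow> ('i \<Rightarrow> nat) \<Rightarrow> ('i \<Rightarrow> int)" where
  "xf N f = (\<lambda>l\<in>N. if 1 \<le> f l then 1 else -1)"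
definition Cset :: "nat \<Rightarrow> ('i \<times> nat) set \<Rightarrow> ('i \<times> nat \<Rightarrow> int) \<Rightarrow> 'i \<Rightarrow> int \<Rightarrow> nat set" where
  "Cset k \<Lambda> \<sigma> l c = {j\<in>{0..k}. (1 \<le> j \<longleftrightarrow> c = 1) \<and> (\<forall>j'. (l,j') \<in> \<Lambda> \<longrightarrow> \<sigma> (l,j') = (if j' = j then 1 else -1))}"
definition vv :: "nat \<Rightarrow> ('i \<times> nat) set \<Rightarrow> ('i \<times> nat \<Rightarrow> int) \<Rightarrow> 'i \<Rightarrow> int \<Rightarrow> real" where
  "vv k \<Lambda> \<sigma> l c = real (card (Cset k \<Lambda> \<sigma> l c)) / (if c = 1 then real k else 1)"

lemma gy_cube: "gy N k f \<in> cube (N\<times>{1..k})"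
  by (auto simp: gy_def cube_def)

lemma xf_cube: "xf N f \<in> cube N"
  by (auto simp: xf_def cube_def)

lemma gy_inj: "inj_on (gy N k) (N \<rightarrow>\<^sub>E {0..k})"
proof (rule inj_onI)
  fix f g assume f: "f \<in> N \<rightarrow>\<^sub>E {0..k}" and g: "g \<in> N \<rightarrow>\<^sub>E {0..k}" and eq: "gy N k f = gy N k g"
  show "f = g"
  proof
    fix l show "f l = g l"
    proof (cases "l \<in> N")
      case False then show ?thesis using f g by (auto simp: PiE_iff extensional_def)
    next
      case True
      have fl: "f l \<le> k" and gl: "g l \<le> k" using f g True by (auto simp: PiE_iff)
      show ?thesis
      proof (rule ccontr)
        assume ne: "f l \<noteq> g l"
        show False
        proof (cases "1 \<le> f l")
          case True
          have "gy N k f (l, f l) = gy N k g (l, f l)" using eq by simp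
          then show False using True fl ne \<open>l \<in> N\<close> by (auto simp: gy_def split: if_splits)
        next
          case False
          then have "1 \<le> g l" using ne by simp
          have "gy N k f (l, g l) = gy N k g (l, g l)" using eq by simp
          then show False using \<open>1 \<le> g l\<close> gl ne \<open>l \<in> N\<close> by (auto simp: gy_def split: if_splits)
        qed
      qed
    qed
  qed
qed

lemma gy_valid: "\<forall>l\<in>N. card {j\<in>{1..k}. gy N k f (l,j) = 1} \<le> 1"
proof
  fix l assume l: "l \<in> N"
  have "{j\<in>{1..k}. gy N k f (l,j) = 1} \<subseteq> {f l}" 
  proof
    fix j assume "j \<in> {j\<in>{1..k}. gy N k f (l,j) = 1}"
    then have "j \<in> {1..k}" "gy N k f (l,j) = 1" by auto
    then show "j \<in> {f l}" using l by (simp add: gy_def split: if_splits)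
  qed
  then have "card {j\<in>{1..k}. gy N k f (l,j) = 1} \<le> card {f l}" by (intro card_mono) auto
  then show "card {j\<in>{1..k}. gy N k f (l,j) = 1} \<le> 1" by simp
qed

lemma rd_proj_gy: "f \<in> N \<rightarrow>\<^sub>E {0..k} \<Longrightarrow> rd_proj N k (gy N k f) = xf N f"
  by (auto simp: rd_proj_def xf_def gy_def fun_eq_iff PiE_iff)

lemma Rd_gy: "f \<in> N \<rightarrow>\<^sub>E {0..k} \<Longrightarrow> Rd N \<mu> k (gy N k f) = \<mu> (xf N f) / real k ^ card {l\<in>N. xf N f l = 1}"
  using gy_cube[of N k f] gy_valid[of N k f] by (simp add: Rd_def rd_proj_gy)

lemma Rd_zero:
  assumes y: "y \<in> cube (N\<times>{1..k})" and ny: "y \<notin> gy N k ` (N \<rightarrow>\<^sub>E {0..k})"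
  shows "Rd N \<mu> k y = 0"
proof (rule ccontr)
  assume "Rd N \<mu> k y \<noteq> 0"
  then have v: "\<forall>l\<in>N. card {j\<in>{1..k}. y (l,j) = 1} \<le> 1" by (auto simp: Rd_def split: if_splits)
  define f where "f = (\<lambda>l\<in>N. if \<exists>j\<in>{1..k}. y (l,j) = 1 then (SOME j. j\<in>{1..k} \<and> y (l,j) = 1) else 0)"
  have fS: "f l \<in> {1..k} \<and> y (l, f l) = 1" if "l \<in> N" "\<exists>j\<in>{1..k}. y (l,j) = 1" for l
  proof -
    have "\<exists>j. j\<in>{1..k} \<and> y (l,j) = 1" using that by blast
    then have "(SOME j. j\<in>{1..k} \<and> y (l,j) = 1) \<in> {1..k} \<and> y (l, SOME j. j\<in>{1..k} \<and> y (l,j) = 1) = 1"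
      by (rule someI_ex)
    then show ?thesis using that by (simp add: f_def)
  qed
  have f0: "f l = 0" if "l \<in> N" "\<not>(\<exists>j\<in>{1..k}. y (l,j) = 1)" for l using that by (simp add: f_def)
  have fF: "f \<in> N \<rightarrow>\<^sub>E {0..k}"
  proof -
    have "f l \<in> {0..k}" if "l \<in> N" for l using fS[OF that] f0[OF that] by (cases "\<exists>j\<in>{1..k}. y (l,j) = 1") auto
    then show ?thesis by (auto simp: f_def PiE_iff extensional_def)
  qed
  have "gy N k f = y"
  proof
    fix p show "gy N k f p = y p"
    proof (cases "p \<in> N\<times>{1..k}")
      case False
      have "y \<in> extensional (N\<times>{1..k})" using y by (simp add: cube_def PiE_iff)
      then have "y p = undefined" using False by (rule extensional_arb)
      then show ?thesis using False by (simp add: gy_def)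
    next
      case True
      obtain l j where p: "p = (l,j)" "l \<in> N" "j \<in> {1..k}" using True by auto
      have yv: "y (l,j) = 1 \<or> y (l,j) = -1" using cube_val[OF y, of "(l,j)"] p(2,3) by auto
      show ?thesis
      proof (cases "y (l,j) = 1")
        case True
        then have ex: "\<exists>j\<in>{1..k}. y (l,j) = 1" using p by blast
        have fin: "finite {j\<in>{1..k}. y (l,j) = 1}" by simp
        have "f l = j" using fS[OF p(2) ex] True p(3) v p(2) card_le_Suc0_iff_eq[OF fin] by auto
        then show ?thesis using p True by (simp add: gy_def)
      next
        case False
        have "f l \<noteq> j"
        proof
          assume "f l = j"
          then show False
            using fS[OF p(2)] f0[OF p(2)] False p(3) by (cases "\<exists>j\<in>{1..k}. y (l,j) = 1") auto
        qed
        then show ?thesis using p False yv by (simp add: gy_def)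
      qed
    qed
  qed
  then show False using ny fF by blast
qed

lemma fiber:
  assumes x: "x \<in> cube N" and \<Lambda>: "\<Lambda> \<subseteq> N\<times>{1..k}" and \<sigma>: "\<sigma> \<in> extensional \<Lambda>"
  shows "{f\<in>N \<rightarrow>\<^sub>E {0..k}. restrict (gy N k f) \<Lambda> = \<sigma> \<and> xf N f = x} = PiE N (\<lambda>l. Cset k \<Lambda> \<sigma> l (x l))"
proof (intro equalityI subsetI)
  fix f assume "f \<in> {f\<in>N \<rightarrow>\<^sub>E {0..k}. restrict (gy N k f) \<Lambda> = \<sigma> \<and> xf N f = x}"
  then have f: "f \<in> N \<rightarrow>\<^sub>E {0..k}" and r: "restrict (gy N k f) \<Lambda> = \<sigma>" and xx: "xf N f = x" by auto
  have "f l \<in> Cset k \<Lambda> \<sigma> l (x l)" if l: "l \<in> N" for l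
  proof -
    have fl: "f l \<in> {0..k}" using f l by auto
    have "x l = (if 1 \<le> f l then 1 else -1)" using fun_cong[OF xx, of l] l by (simp add: xf_def)
    then have a: "(1 \<le> f l \<longleftrightarrow> x l = 1)" by auto
    have b: "\<sigma> (l,j') = (if j' = f l then 1 else -1)" if "(l,j') \<in> \<Lambda>" for j'
      using fun_cong[OF r, of "(l,j')"] that \<Lambda> by (auto simp: gy_def)
    show ?thesis using fl a b by (simp add: Cset_def)
  qed
  then show "f \<in> PiE N (\<lambda>l. Cset k \<Lambda> \<sigma> l (x l))" using f by (auto simp: PiE_iff)
next
  fix f assume f: "f \<in> PiE N (\<lambda>l. Cset k \<Lambda> \<sigma> l (x l))"
  have fF: "f \<in> N \<rightarrow>\<^sub>E {0..k}" using f by (auto simp: PiE_iff Cset_def)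
  have r: "restrict (gy N k f) \<Lambda> = \<sigma>"
  proof
    fix p show "restrict (gy N k f) \<Lambda> p = \<sigma> p"
    proof (cases "p \<in> \<Lambda>")
      case False then show ?thesis by (simp add: extensional_arb[OF \<sigma> False])
    next
      case True
      obtain l j where p: "p = (l,j)" by fastforce
      have lj: "l \<in> N" "j \<in> {1..k}" using True \<Lambda> p by auto
      have "f l \<in> Cset k \<Lambda> \<sigma> l (x l)" using f lj by (auto simp: PiE_iff)
      then have "\<sigma> (l,j) = (if j = f l then 1 else -1)" using True p by (auto simp: Cset_def)
      then show ?thesis using True p lj by (simp add: gy_def)
    qed
  qed
  have xx: "xf N f = x"
  proof
    fix l show "xf N f l = x l"
    proof (cases "l \<in> N")
      case False then show ?thesis using x by (auto simp: xf_def cube_def PiE_iff extensional_def)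
    next
      case True
      have "f l \<in> Cset k \<Lambda> \<sigma> l (x l)" using f True by (auto simp: PiE_iff)
      then have "(1 \<le> f l \<longleftrightarrow> x l = 1)" by (simp add: Cset_def)
      moreover have "x l = 1 \<or> x l = -1" using cube_val[OF x True] .
      ultimately show ?thesis using True by (auto simp: xf_def)
    qed
  qed
  show "f \<in> {f\<in>N \<rightarrow>\<^sub>E {0..k}. restrict (gy N k f) \<Lambda> = \<sigma> \<and> xf N f = x}" using fF r xx by blast
qed


lemma Yformula:
  assumes finN: "finite N" and \<Lambda>: "\<Lambda> \<subseteq> N\<times>{1..k}" and \<sigma>: "\<sigma> \<in> extensional \<Lambda>"
  shows "marg (N\<times>{1..k}) (Rd N \<mu> k) \<Lambda> \<sigma> = (\<Sum>x\<in>cube N. \<mu> x * (\<Prod>l\<in>N. vv k \<Lambda> \<sigma> l (x l)))"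
proof -
  let ?M = "N\<times>{1..k}"
  let ?F = "N \<rightarrow>\<^sub>E {0..k}"
  let ?F' = "{f\<in>?F. restrict (gy N k f) \<Lambda> = \<sigma>}"
  define h where "h f = \<mu> (xf N f) / real k ^ card {l\<in>N. xf N f l = 1}" for f
  have finM: "finite ?M" using finN by simp
  have finF: "finite ?F" using finN by (simp add: finite_PiE)
  have "marg ?M (Rd N \<mu> k) \<Lambda> \<sigma> = (\<Sum>y\<in>{y\<in>cube ?M. restrict y \<Lambda> = \<sigma>}. Rd N \<mu> k y)"
    by (simp add: marg_def)
  also have "\<dots> = (\<Sum>y\<in>{y\<in>gy N k ` ?F. restrict y \<Lambda> = \<sigma>}. Rd N \<mu> k y)"
  proof (rule sum.mono_neutral_right)
    show "finite {y\<in>cube ?M. restrict y \<Lambda> = \<sigma>}" using finite_cube[OF finM] by simp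
    show "{y\<in>gy N k ` ?F. restrict y \<Lambda> = \<sigma>} \<subseteq> {y\<in>cube ?M. restrict y \<Lambda> = \<sigma>}"
      using gy_cube by auto
    show "\<forall>y\<in>{y\<in>cube ?M. restrict y \<Lambda> = \<sigma>} - {y\<in>gy N k ` ?F. restrict y \<Lambda> = \<sigma>}. Rd N \<mu> k y = 0"
      using Rd_zero by blast
  qed
  also have "{y\<in>gy N k ` ?F. restrict y \<Lambda> = \<sigma>} = gy N k ` ?F'" by auto
  also have "(\<Sum>y\<in>gy N k ` ?F'. Rd N \<mu> k y) = (\<Sum>f\<in>?F'. Rd N \<mu> k (gy N k f))"
  proof -
    have "inj_on (gy N k) ?F'" by (rule inj_on_subset[OF gy_inj]) auto
    then show ?thesis by (simp add: sum.reindex o_def)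
  qed
  also have "\<dots> = (\<Sum>f\<in>?F'. h f)" by (rule sum.cong) (auto simp: Rd_gy h_def)
  also have "\<dots> = (\<Sum>x\<in>cube N. \<Sum>f\<in>{f. f \<in> ?F' \<and> xf N f = x}. h f)"
    by (rule sum.group[symmetric]) (use finF finite_cube[OF finN] xf_cube in auto)
  also have "\<dots> = (\<Sum>x\<in>cube N. \<mu> x * (\<Prod>l\<in>N. vv k \<Lambda> \<sigma> l (x l)))"
  proof (rule sum.cong[OF refl])
    fix x assume x: "x \<in> cube N"
    have e: "{f. f \<in> ?F' \<and> xf N f = x} = PiE N (\<lambda>l. Cset k \<Lambda> \<sigma> l (x l))"
      using fiber[OF x \<Lambda> \<sigma>] by auto
    have "(\<Sum>f\<in>{f. f \<in> ?F' \<and> xf N f = x}. h f) = (\<Sum>f\<in>PiE N (\<lambda>l. Cset k \<Lambda> \<sigma> l (x l)). \<mu> x / real k ^ card {l\<in>N. x l = 1})"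
      unfolding e by (rule sum.cong) (auto simp: h_def fiber[OF x \<Lambda> \<sigma>, symmetric])
    also have "\<dots> = real (\<Prod>l\<in>N. card (Cset k \<Lambda> \<sigma> l (x l))) * (\<mu> x / real k ^ card {l\<in>N. x l = 1})"
      by (simp add: card_PiE[OF finN])
    also have "\<dots> = \<mu> x * (\<Prod>l\<in>N. vv k \<Lambda> \<sigma> l (x l))"
    proof -
      have p1: "(\<Prod>l\<in>N. (if x l = 1 then real k else 1)) = real k ^ card {l\<in>N. x l = 1}"
        by (simp add: prod.inter_filter[OF finN, symmetric])
      have "(\<Prod>l\<in>N. vv k \<Lambda> \<sigma> l (x l)) = (\<Prod>l\<in>N. real (card (Cset k \<Lambda> \<sigma> l (x l)))) / (\<Prod>l\<in>N. (if x l = 1 then real k else 1))"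
        unfolding vv_def by (rule prod_dividef)
      then show ?thesis unfolding p1 by simp
    qed
    finally show "(\<Sum>f\<in>{f. f \<in> ?F' \<and> xf N f = x}. h f) = \<mu> x * (\<Prod>l\<in>N. vv k \<Lambda> \<sigma> l (x l))" .
  qed
  finally show ?thesis .
qed


lemma vv_other:
  "l \<noteq> i \<Longrightarrow> vv k (insert (i,j) \<Lambda>) (\<sigma>((i,j):=c)) l c' = vv k \<Lambda> \<sigma> l c'"
  by (simp add: vv_def Cset_def)

lemma Cset_m_sub: "Cset k \<Lambda> \<sigma> l (-1) \<subseteq> {0}" by (auto simp: Cset_def)
lemma Cset_p_sub: "Cset k \<Lambda> \<sigma> l 1 \<subseteq> {1..k}" by (auto simp: Cset_def)

lemma vv_props:
  assumes "k \<ge> 1"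
  shows "(vv k \<Lambda> \<sigma> l (-1) = 0 \<or> vv k \<Lambda> \<sigma> l (-1) = 1) \<and> 0 \<le> vv k \<Lambda> \<sigma> l 1 \<and> vv k \<Lambda> \<sigma> l 1 \<le> 1"
proof -
  have "card (Cset k \<Lambda> \<sigma> l (-1)) \<le> card {0::nat}" by (rule card_mono[OF _ Cset_m_sub]) simp
  then have c1: "card (Cset k \<Lambda> \<sigma> l (-1)) = 0 \<or> card (Cset k \<Lambda> \<sigma> l (-1)) = 1" by auto
  have "card (Cset k \<Lambda> \<sigma> l 1) \<le> card {1..k}" by (rule card_mono[OF _ Cset_p_sub]) simp
  then have c2: "real (card (Cset k \<Lambda> \<sigma> l 1)) \<le> real k" by simp
  show ?thesis using c1 c2 assms by (auto simp: vv_def)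
qed

lemma vv_nonneg: "0 \<le> vv k \<Lambda> \<sigma> l c" by (simp add: vv_def)

lemma vv_mono:
  assumes "S \<subseteq> \<Lambda>" "vv k \<Lambda> \<sigma> l c > 0"
  shows "vv k S (restrict \<sigma> S) l c > 0"
proof -
  have "Cset k \<Lambda> \<sigma> l c \<subseteq> Cset k S (restrict \<sigma> S) l c" using assms(1) by (auto simp: Cset_def)
  moreover have "Cset k \<Lambda> \<sigma> l c \<noteq> {}" using assms(2) by (auto simp: vv_def)
  moreover have "finite (Cset k S (restrict \<sigma> S) l c)" by (simp add: Cset_def)
  ultimately have "card (Cset k S (restrict \<sigma> S) l c) > 0" by (metis card_gt_0_iff subset_empty)
  moreover have "k > 0 \<or> c \<noteq> 1" using assms(2) by (auto simp: vv_def)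
  ultimately show ?thesis by (auto simp: vv_def)
qed

context
  fixes k :: nat and \<Lambda> :: "('i \<times> nat) set" and \<sigma> :: "'i \<times> nat \<Rightarrow> int" and i :: 'i and j :: nat
  assumes jk: "j \<in> {1..k}" and nin: "(i,j) \<notin> \<Lambda>" and Lsub: "\<forall>j'. (i,j')\<in>\<Lambda> \<longrightarrow> 1 \<le> j'"
begin

lemma Cpp: "Cset k (insert (i,j) \<Lambda>) (\<sigma>((i,j):=1)) i 1 = (if (\<forall>j'. (i,j')\<in>\<Lambda> \<longrightarrow> \<sigma>(i,j') = -1) then {j} else {})"
proof -
  have "j0 \<in> Cset k (insert (i,j) \<Lambda>) (\<sigma>((i,j):=1)) i 1 \<longleftrightarrow> j0 = j \<and> (\<forall>j'. (i,j')\<in>\<Lambda> \<longrightarrow> \<sigma>(i,j') = -1)" for j0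
  proof
    assume h: "j0 \<in> Cset k (insert (i,j) \<Lambda>) (\<sigma>((i,j):=1)) i 1"
    then have a: "\<forall>j'. (i,j') \<in> insert (i,j) \<Lambda> \<longrightarrow> (\<sigma>((i,j):=1)) (i,j') = (if j' = j0 then 1 else -1)"
      by (simp add: Cset_def)
    from a[rule_format, of j] have "j0 = j" by (auto split: if_splits)
    moreover have "\<sigma>(i,j') = -1" if "(i,j')\<in>\<Lambda>" for j'
      using a[rule_format, of j'] that nin \<open>j0 = j\<close> by (auto split: if_splits)
    ultimately show "j0 = j \<and> (\<forall>j'. (i,j')\<in>\<Lambda> \<longrightarrow> \<sigma>(i,j') = -1)" by blast
  next
    assume "j0 = j \<and> (\<forall>j'. (i,j')\<in>\<Lambda> \<longrightarrow> \<sigma>(i,j') = -1)"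
    then show "j0 \<in> Cset k (insert (i,j) \<Lambda>) (\<sigma>((i,j):=1)) i 1" using jk nin by (auto simp: Cset_def)
  qed
  then show ?thesis by auto
qed

lemma Cpm: "Cset k (insert (i,j) \<Lambda>) (\<sigma>((i,j):=1)) i (-1) = {}"
  using jk by (auto simp: Cset_def)

lemma Cmm: "Cset k (insert (i,j) \<Lambda>) (\<sigma>((i,j):=-1)) i (-1) = (if (\<forall>j'. (i,j')\<in>\<Lambda> \<longrightarrow> \<sigma>(i,j') = -1) then {0} else {})"
proof -
  have "j0 \<in> Cset k (insert (i,j) \<Lambda>) (\<sigma>((i,j):=-1)) i (-1) \<longleftrightarrow> j0 = 0 \<and> (\<forall>j'. (i,j')\<in>\<Lambda> \<longrightarrow> \<sigma>(i,j') = -1)" for j0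
  proof
    assume h: "j0 \<in> Cset k (insert (i,j) \<Lambda>) (\<sigma>((i,j):=-1)) i (-1)"
    then have a: "\<forall>j'. (i,j') \<in> insert (i,j) \<Lambda> \<longrightarrow> (\<sigma>((i,j):=-1)) (i,j') = (if j' = j0 then 1 else -1)"
      and z: "j0 = 0" by (auto simp: Cset_def)
    have "\<sigma>(i,j') = -1" if "(i,j')\<in>\<Lambda>" for j'
      using a[rule_format, of j'] that nin z jk Lsub by (auto split: if_splits)
    then show "j0 = 0 \<and> (\<forall>j'. (i,j')\<in>\<Lambda> \<longrightarrow> \<sigma>(i,j') = -1)" using z by blast
  next
    assume "j0 = 0 \<and> (\<forall>j'. (i,j')\<in>\<Lambda> \<longrightarrow> \<sigma>(i,j') = -1)"
    then show "j0 \<in> Cset k (insert (i,j) \<Lambda>) (\<sigma>((i,j):=-1)) i (-1)" using jk nin Lsub by (auto simp: Cset_def)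
  qed
  then show ?thesis by auto
qed

lemma vpp: "vv k (insert (i,j) \<Lambda>) (\<sigma>((i,j):=1)) i 1 = (if (\<forall>j'. (i,j')\<in>\<Lambda> \<longrightarrow> \<sigma>(i,j') = -1) then 1 / real k else 0)"
  by (cases "\<forall>j'. (i,j')\<in>\<Lambda> \<longrightarrow> \<sigma>(i,j') = -1") (auto simp: vv_def Cpp)

lemma vpm: "vv k (insert (i,j) \<Lambda>) (\<sigma>((i,j):=1)) i (-1) = 0"
  by (simp add: vv_def Cpm)

lemma vmm: "vv k (insert (i,j) \<Lambda>) (\<sigma>((i,j):=-1)) i (-1) = (if (\<forall>j'. (i,j')\<in>\<Lambda> \<longrightarrow> \<sigma>(i,j') = -1) then 1 else 0)"
  by (cases "\<forall>j'. (i,j')\<in>\<Lambda> \<longrightarrow> \<sigma>(i,j') = -1") (simp_all add: vv_def Cmm)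

end


lemma final_ineq:
  fixes A B AS BS c cS z k :: real
  assumes "A\<ge>0" "B>0" "AS\<ge>0" "BS\<ge>0" "0\<le>c" "0\<le>cS" "cS\<le>1" "k\<ge>1" "A \<le> z*B" "A*BS \<le> z*B*AS" "cS*AS+BS > 0" "z>1"
  shows "(A/k)/(c*A+B) \<le> 2*z*((AS/k)/(cS*AS+BS))"
proof -
  have D: "c*A+B > 0" using assms by (simp add: add_nonneg_pos)
  have "cS*AS \<le> AS" using assms mult_right_mono[of cS 1 AS] by simp
  then have "A*(cS*AS) \<le> A*AS" using assms by (intro mult_left_mono) auto
  then have "A*cS*AS \<le> A*AS" by (simp add: mult.assoc)
  also have "\<dots> \<le> z*B*AS" using assms by (simp add: mult_right_mono)
  finally have "A*(cS*AS+BS) \<le> 2*z*B*AS" using assms by (simp add: algebra_simps)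
  also have "\<dots> \<le> 2*z*AS*(c*A+B)" using assms by (simp add: algebra_simps mult_nonneg_nonneg)
  finally have key: "A*(cS*AS+BS) \<le> 2*z*AS*(c*A+B)" .
  have "(A/k)/(c*A+B) = A/(k*(c*A+B))" by simp
  also have "\<dots> \<le> 2*z*AS/(k*(cS*AS+BS))"
  proof -
    have kD: "k*(c*A+B) > 0" and kDS: "k*(cS*AS+BS) > 0" using D assms by auto
    have "k*(A*(cS*AS+BS)) \<le> k*(2*z*AS*(c*A+B))" using key assms by (intro mult_left_mono) auto
    then have num: "A*(k*(cS*AS+BS)) - 2*z*AS*(k*(c*A+B)) \<le> 0" by (simp add: algebra_simps)
    have "(A*(k*(cS*AS+BS)) - 2*z*AS*(k*(c*A+B))) / ((k*(c*A+B))*(k*(cS*AS+BS))) \<le> 0"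
      using num kD kDS by (intro divide_nonpos_pos) auto
    moreover have ne: "k*(c*A+B) \<noteq> 0" "k*(cS*AS+BS) \<noteq> 0" using kD kDS by auto
    ultimately show ?thesis by (subst frac_le_eq[OF ne(1) ne(2)])
  qed
  finally show ?thesis by simp
qed
lemma final_ineq2:
  fixes A B c z k :: real
  assumes "A\<ge>0" "B>0" "0\<le>c" "k\<ge>1" "A \<le> z*B" "z>1"
  shows "(A/k)/(c*A+B) \<le> 2*z"
proof -
  have D: "c*A+B > 0" using assms by (simp add: add_nonneg_pos)
  have "A \<le> 2*z*(k*(c*A+B))"
  proof -
    have "A \<le> z*B" by fact
    also have "\<dots> \<le> 2*z*B" using assms by simp
    also have "\<dots> \<le> 2*z*(k*B)" using assms by (simp add: mult_left_mono)
    also have "\<dots> \<le> 2*z*(k*(c*A+B))" using assms by (intro mult_left_mono) (auto simp: mult_nonneg_nonneg)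
    finally show ?thesis .
  qed
  then show ?thesis using D assms by (simp add: divide_le_eq)
qed


lemma Qsplit:
  assumes finN: "finite N" and iN: "i \<in> N"
  shows "(\<Sum>x\<in>cube N. \<mu> x * (\<Prod>l\<in>N. w l (x l))) = w i 1 * AA N \<mu> w i 1 + w i (-1) * AA N \<mu> w i (-1)"
proof -
  have fc: "finite (cube N)" by (rule finite_cube[OF finN])
  have u: "cube N = {x\<in>cube N. x i = 1} \<union> {x\<in>cube N. x i = -1}" using cube_val[OF _ iN] by auto
  have "(\<Sum>x\<in>cube N. \<mu> x * (\<Prod>l\<in>N. w l (x l))) =
      (\<Sum>x\<in>{x\<in>cube N. x i = 1}. \<mu> x * (\<Prod>l\<in>N. w l (x l))) + (\<Sum>x\<in>{x\<in>cube N. x i = -1}. \<mu> x * (\<Prod>l\<in>N. w l (x l)))"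
    by (subst u, rule sum.union_disjoint) (use fc in auto)
  also have "(\<Sum>x\<in>{x\<in>cube N. x i = 1}. \<mu> x * (\<Prod>l\<in>N. w l (x l))) = w i 1 * AA N \<mu> w i 1"
    unfolding AA_def sum_distrib_left
    by (rule sum.cong) (auto simp: prod.remove[OF finN iN])
  also have "(\<Sum>x\<in>{x\<in>cube N. x i = -1}. \<mu> x * (\<Prod>l\<in>N. w l (x l))) = w i (-1) * AA N \<mu> w i (-1)"
    unfolding AA_def sum_distrib_left
    by (rule sum.cong) (auto simp: prod.remove[OF finN iN])
  finally show ?thesis .
qed

lemma AA_cong: "(\<And>l. l \<in> N-{i} \<Longrightarrow> w l = w' l) \<Longrightarrow> AA N \<mu> w i c = AA N \<mu> w' i c"
  unfolding AA_def by (intro sum.cong refl arg_cong2[where f="(*)"] prod.cong) auto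

lemma Rd_nonneg:
  assumes "\<forall>x\<in>cube N. 0 \<le> \<mu> x"
  shows "\<forall>y\<in>cube (N\<times>{1..k}). 0 \<le> Rd N \<mu> k y"
proof
  fix y
  have "rd_proj N k y \<in> cube N" by (auto simp: rd_proj_def cube_def)
  then show "0 \<le> Rd N \<mu> k y" using assms by (auto simp: Rd_def)
qed


lemma Ycomp:
  assumes finN: "finite N" and k1: "k \<ge> 1" and \<Lambda>M: "\<Lambda> \<subseteq> N\<times>{1..k}" and nin: "(i,j) \<notin> \<Lambda>"
    and iN: "i \<in> N" and jk: "j \<in> {1..k}" and \<sigma>E: "\<sigma> \<in> extensional \<Lambda>"
  shows "marg (N\<times>{1..k}) (Rd N \<mu> k) (insert (i,j) \<Lambda>) (\<sigma>((i,j):=1)) =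
           (if (\<forall>j'. (i,j')\<in>\<Lambda> \<longrightarrow> \<sigma>(i,j') = -1) then 1 / real k else 0) * AA N \<mu> (vv k \<Lambda> \<sigma>) i 1"
    and "\<exists>c. 0 \<le> c \<and> c \<le> 1 \<and> marg (N\<times>{1..k}) (Rd N \<mu> k) (insert (i,j) \<Lambda>) (\<sigma>((i,j):=-1)) =
           c * AA N \<mu> (vv k \<Lambda> \<sigma>) i 1 + (if (\<forall>j'. (i,j')\<in>\<Lambda> \<longrightarrow> \<sigma>(i,j') = -1) then 1 else 0) * AA N \<mu> (vv k \<Lambda> \<sigma>) i (-1)"
proof -
  have Lsub: "\<forall>j'. (i,j')\<in>\<Lambda> \<longrightarrow> 1 \<le> j'" using \<Lambda>M by auto
  have iM: "insert (i,j) \<Lambda> \<subseteq> N\<times>{1..k}" using \<Lambda>M iN jk by auto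
  have ext: "\<sigma>((i,j):=c) \<in> extensional (insert (i,j) \<Lambda>)" for c
    unfolding extensional_def
  proof (intro CollectI allI impI)
    fix p assume "p \<notin> insert (i,j) \<Lambda>"
    then show "(\<sigma>((i,j):=c)) p = undefined" using extensional_arb[OF \<sigma>E, of p] by auto
  qed
  have AAc: "AA N \<mu> (vv k (insert (i,j) \<Lambda>) (\<sigma>((i,j):=c))) i c' = AA N \<mu> (vv k \<Lambda> \<sigma>) i c'" for c c'
  proof (rule AA_cong)
    fix l assume "l \<in> N-{i}"
    then have "l \<noteq> i" by blast
    then show "vv k (insert (i,j) \<Lambda>) (\<sigma>((i,j):=c)) l = vv k \<Lambda> \<sigma> l"
      by (simp add: fun_eq_iff vv_other)
  qed
  have e: "marg (N\<times>{1..k}) (Rd N \<mu> k) (insert (i,j) \<Lambda>) (\<sigma>((i,j):=c)) =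
      vv k (insert (i,j) \<Lambda>) (\<sigma>((i,j):=c)) i 1 * AA N \<mu> (vv k \<Lambda> \<sigma>) i 1 +
      vv k (insert (i,j) \<Lambda>) (\<sigma>((i,j):=c)) i (-1) * AA N \<mu> (vv k \<Lambda> \<sigma>) i (-1)" for c
    unfolding Yformula[OF finN iM ext] Qsplit[OF finN iN] AAc ..
  show "marg (N\<times>{1..k}) (Rd N \<mu> k) (insert (i,j) \<Lambda>) (\<sigma>((i,j):=1)) =
           (if (\<forall>j'. (i,j')\<in>\<Lambda> \<longrightarrow> \<sigma>(i,j') = -1) then 1 / real k else 0) * AA N \<mu> (vv k \<Lambda> \<sigma>) i 1"
    unfolding e vpp[OF jk nin Lsub] vpm[OF jk nin Lsub] by simp
  show "\<exists>c. 0 \<le> c \<and> c \<le> 1 \<and> marg (N\<times>{1..k}) (Rd N \<mu> k) (insert (i,j) \<Lambda>) (\<sigma>((i,j):=-1)) =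
           c * AA N \<mu> (vv k \<Lambda> \<sigma>) i 1 + (if (\<forall>j'. (i,j')\<in>\<Lambda> \<longrightarrow> \<sigma>(i,j') = -1) then 1 else 0) * AA N \<mu> (vv k \<Lambda> \<sigma>) i (-1)"
  proof (intro exI conjI)
    let ?c = "vv k (insert (i,j) \<Lambda>) (\<sigma>((i,j):=-1)) i 1"
    show "0 \<le> ?c" "?c \<le> 1" using vv_props[OF k1, of "insert (i,j) \<Lambda>" "\<sigma>((i,j):=-1)" i] by auto
    show "marg (N\<times>{1..k}) (Rd N \<mu> k) (insert (i,j) \<Lambda>) (\<sigma>((i,j):=-1)) =
           ?c * AA N \<mu> (vv k \<Lambda> \<sigma>) i 1 + (if (\<forall>j'. (i,j')\<in>\<Lambda> \<longrightarrow> \<sigma>(i,j') = -1) then 1 else 0) * AA N \<mu> (vv k \<Lambda> \<sigma>) i (-1)"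
      unfolding e vmm[OF jk nin Lsub] ..
  qed
qed


theorem lemma6p3:
  fixes N :: "'i set" and \<mu> :: "('i \<Rightarrow> int) \<Rightarrow> real" and \<zeta> :: real and k :: nat
  assumes "is_dist N \<mu>"
    and "\<zeta> > 1"
    and "completely_marg_stable N \<zeta> \<mu>"
    and "k \<ge> 1"
  shows "marg_stable (N \<times> {1..k}) (2 * \<zeta>) (Rd N \<mu> k)"
proof -
  note dist = assms(1) and z1 = assms(2) and cms = assms(3) and k1 = assms(4)
  have finN: "finite N" and mu0: "\<forall>x\<in>cube N. 0 \<le> \<mu> x" using dist by (auto simp: is_dist_def)
  have finM: "finite (N \<times> {1..k})" using finN by simp
  have nu0: "\<forall>y\<in>cube (N\<times>{1..k}). 0 \<le> Rd N \<mu> k y" by (rule Rd_nonneg[OF mu0])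
  have z0: "\<zeta> \<ge> 0" using z1 by simp
  show ?thesis unfolding marg_stable_def
  proof (intro ballI allI impI)
    fix p \<Lambda> S \<sigma>
    assume pM: "p \<in> N \<times> {1..k}" and SL: "S \<subseteq> \<Lambda> \<and> \<Lambda> \<subseteq> N \<times> {1..k} - {p}"
      and \<sigma>s: "\<sigma> \<in> supp_marg (N \<times> {1..k}) (Rd N \<mu> k) \<Lambda>"
    obtain i j where p: "p = (i,j)" and iN: "i \<in> N" and jk: "j \<in> {1..k}" using pM by auto
    have \<Lambda>M: "\<Lambda> \<subseteq> N\<times>{1..k}" and nin: "(i,j) \<notin> \<Lambda>" and SsL: "S \<subseteq> \<Lambda>" using SL p by auto
    have SM: "S \<subseteq> N\<times>{1..k}" and ninS: "(i,j) \<notin> S" using SsL \<Lambda>M nin by auto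
    have \<sigma>E: "\<sigma> \<in> extensional \<Lambda>" and mpos: "marg (N\<times>{1..k}) (Rd N \<mu> k) \<Lambda> \<sigma> > 0"
      using \<sigma>s by (auto simp: supp_marg_def cube_def PiE_iff)
    define \<sigma>S where "\<sigma>S = restrict \<sigma> S"
    have \<sigma>SE: "\<sigma>S \<in> extensional S" by (simp add: \<sigma>S_def)
    have mposS: "marg (N\<times>{1..k}) (Rd N \<mu> k) S \<sigma>S > 0"
      using marg_mono[OF finM nu0 SsL, of \<sigma>] mpos by (simp add: \<sigma>S_def)
    define am where "am = (\<forall>j'. (i,j')\<in>\<Lambda> \<longrightarrow> \<sigma>(i,j') = -1)"
    define amS where "amS = (\<forall>j'. (i,j')\<in>S \<longrightarrow> \<sigma>S(i,j') = -1)"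
    define w where "w = vv k \<Lambda> \<sigma>"
    define wS where "wS = vv k S \<sigma>S"
    define A where "A = AA N \<mu> w i 1"
    define B where "B = AA N \<mu> w i (-1)"
    define AS where "AS = AA N \<mu> wS i 1"
    define BS where "BS = AA N \<mu> wS i (-1)"
    define mp where "mp = marg (N\<times>{1..k}) (Rd N \<mu> k) (insert (i,j) \<Lambda>) (\<sigma>((i,j):=1))"
    define mm where "mm = marg (N\<times>{1..k}) (Rd N \<mu> k) (insert (i,j) \<Lambda>) (\<sigma>((i,j):=-1))"
    define mpS where "mpS = marg (N\<times>{1..k}) (Rd N \<mu> k) (insert (i,j) S) (\<sigma>S((i,j):=1))"
    define mmS where "mmS = marg (N\<times>{1..k}) (Rd N \<mu> k) (insert (i,j) S) (\<sigma>S((i,j):=-1))"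
    have wnn: "\<forall>l\<in>N-{i}. 0 \<le> w l 1 \<and> 0 \<le> w l (-1)" by (simp add: w_def vv_nonneg)
    have wSnn: "\<forall>l\<in>N-{i}. 0 \<le> wS l 1 \<and> 0 \<le> wS l (-1)" by (simp add: wS_def vv_nonneg)
    have A0: "A \<ge> 0" and B0: "B \<ge> 0" unfolding A_def B_def by (rule AA_nonneg[OF mu0 wnn])+
    have AS0: "AS \<ge> 0" and BS0: "BS \<ge> 0" unfolding AS_def BS_def by (rule AA_nonneg[OF mu0 wSnn])+
    have emp: "mp = (if am then 1 / real k else 0) * A"
      unfolding mp_def am_def A_def w_def by (rule Ycomp(1)[OF finN k1 \<Lambda>M nin iN jk \<sigma>E])
    obtain c where c: "0 \<le> c" "c \<le> 1" "mm = c * A + (if am then 1 else 0) * B"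
      using Ycomp(2)[OF finN k1 \<Lambda>M nin iN jk \<sigma>E, of \<mu>] unfolding mm_def am_def A_def B_def w_def by blast
    have empS: "mpS = (if amS then 1 / real k else 0) * AS"
      unfolding mpS_def amS_def AS_def wS_def by (rule Ycomp(1)[OF finN k1 SM ninS iN jk \<sigma>SE])
    obtain cS where cS: "0 \<le> cS" "cS \<le> 1" "mmS = cS * AS + (if amS then 1 else 0) * BS"
      using Ycomp(2)[OF finN k1 SM ninS iN jk \<sigma>SE, of \<mu>] unfolding mmS_def amS_def AS_def BS_def wS_def by blast
    have split: "marg (N\<times>{1..k}) (Rd N \<mu> k) \<Lambda> \<sigma> = mp + mm"
      unfolding mp_def mm_def by (rule marg_split[OF finM pM[unfolded p] nin \<sigma>E])
    have r: "ratio (N\<times>{1..k}) (Rd N \<mu> k) \<Lambda> \<sigma> p = (if mm = 0 then \<infinity> else ereal (mp / mm))"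
      unfolding p mp_def mm_def by (rule ratio_eq[OF mpos])
    have rS: "ratio (N\<times>{1..k}) (Rd N \<mu> k) S (restrict \<sigma> S) p = (if mmS = 0 then \<infinity> else ereal (mpS / mmS))"
      unfolding p mpS_def mmS_def \<sigma>S_def[symmetric] by (rule ratio_eq[OF mposS])
    have rS0: "0 \<le> ratio (N\<times>{1..k}) (Rd N \<mu> k) S (restrict \<sigma> S) p" by (rule ratio_nonneg[OF nu0])
    have H: "\<forall>x\<in>cube N. x i = 1 \<longrightarrow> (\<Prod>l\<in>N-{i}. w l (x l)) > 0 \<longrightarrow>
               \<mu> x \<le> \<zeta> * \<mu> (x(i:=-1)) \<and> \<mu> x * BS \<le> \<zeta> * \<mu> (x(i:=-1)) * AS"
    proof (intro ballI impI)
      fix x assume x: "x \<in> cube N" "x i = 1" and pos: "(\<Prod>l\<in>N-{i}. w l (x l)) > 0"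
      have "(\<Prod>l\<in>N-{i}. wS l (x l)) > 0"
      proof (rule prod_pos)
        fix l assume l: "l \<in> N-{i}"
        have "w l (x l) \<noteq> 0"
        proof
          assume "w l (x l) = 0"
          then have "(\<Prod>l\<in>N-{i}. w l (x l)) = 0" using finN l by (intro prod_zero) auto
          with pos show False by simp
        qed
        then have "w l (x l) > 0" using vv_nonneg[of k \<Lambda> \<sigma> l "x l"] by (simp add: w_def)
        then show "wS l (x l) > 0" unfolding w_def wS_def \<sigma>S_def by (rule vv_mono[OF SsL])
      qed
      moreover have "\<forall>l\<in>N-{i}. (wS l (-1) = 0 \<or> wS l (-1) = 1) \<and> 0 \<le> wS l 1 \<and> wS l 1 \<le> 1"
        unfolding wS_def by (intro ballI vv_props[OF k1])
      ultimately show "\<mu> x \<le> \<zeta> * \<mu> (x(i:=-1)) \<and> \<mu> x * BS \<le> \<zeta> * \<mu> (x(i:=-1)) * AS"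
        using lemG[OF dist cms iN _ x z0] unfolding AS_def BS_def by blast
    qed
    have med1: "A * 1 \<le> \<zeta> * B * 1"
      unfolding A_def B_def by (rule mediant[OF finN iN mu0 wnn]) (use H in auto)
    have med2: "A * BS \<le> \<zeta> * B * AS"
      unfolding A_def B_def by (rule mediant[OF finN iN mu0 wnn]) (use H in auto)
    show "ratio (N\<times>{1..k}) (Rd N \<mu> k) \<Lambda> \<sigma> p \<le> ereal (2 * \<zeta>) \<and>
          ratio (N\<times>{1..k}) (Rd N \<mu> k) \<Lambda> \<sigma> p \<le> ereal (2 * \<zeta>) * ratio (N\<times>{1..k}) (Rd N \<mu> k) S (restrict \<sigma> S) p"
    proof (cases am)
      case False
      then have "mp = 0" using emp by simp
      then have "mm > 0" using split mpos by simp
      then have "ratio (N\<times>{1..k}) (Rd N \<mu> k) \<Lambda> \<sigma> p = 0" using r \<open>mp = 0\<close> by (simp add: zero_ereal_def)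
      moreover have "0 \<le> ereal (2 * \<zeta>) * ratio (N\<times>{1..k}) (Rd N \<mu> k) S (restrict \<sigma> S) p"
        using rS0 z0 by (simp add: mult_nonneg_nonneg)
      ultimately show ?thesis using z0 by simp
    next
      case True
      have amS: amS using True SsL by (auto simp: am_def amS_def \<sigma>S_def)
      have mp': "mp = A / real k" using emp True by simp
      have mm': "mm = c * A + B" using c True by simp
      have Bpos: "B > 0"
      proof (rule ccontr)
        assume "\<not> B > 0"
        then have "B = 0" using B0 by simp
        then have "A = 0" using med1 A0 by simp
        then show False using split mpos mp' mm' \<open>B = 0\<close> by simp
      qed
      have mmpos: "mm > 0" using mm' Bpos A0 c by (simp add: add_nonneg_pos)
      have rr: "ratio (N\<times>{1..k}) (Rd N \<mu> k) \<Lambda> \<sigma> p = ereal ((A / real k) / (c * A + B))"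
        using r mmpos mp' mm' by simp
      have g1: "(A / real k) / (c * A + B) \<le> 2 * \<zeta>"
        by (rule final_ineq2) (use A0 Bpos c k1 med1 z1 in auto)
      have g2: "ratio (N\<times>{1..k}) (Rd N \<mu> k) \<Lambda> \<sigma> p \<le> ereal (2 * \<zeta>) * ratio (N\<times>{1..k}) (Rd N \<mu> k) S (restrict \<sigma> S) p"
      proof (cases "mmS = 0")
        case True
        then show ?thesis using rS z1 by simp
      next
        case False
        have mpS': "mpS = AS / real k" using empS amS by simp
        have mmS': "mmS = cS * AS + BS" using cS amS by simp
        have DS: "cS * AS + BS > 0" using False mmS' cS AS0 BS0 by (simp add: less_le)
        have "(A / real k) / (c * A + B) \<le> 2 * \<zeta> * ((AS / real k) / (cS * AS + BS))"
          by (rule final_ineq) (use A0 Bpos AS0 BS0 c cS k1 med1 med2 DS z1 in auto)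
        then show ?thesis using rr rS False mpS' mmS' by simp
      qed
      show ?thesis using rr g1 g2 by simp
    qed
  qed
qed


end
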